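(* Let $A,B$ be hypermatrices of order $n$ with $\Xi(A),\Xi(B)\in\mathcal C_n$. Then $A\preceq_B B$ if and only if $\Delta(A)_{i,j,k}\le\Delta(B)_{i,j,k}$ for all $i,k\in[n]$ and $j\in[ik]$.
   Context: Let $[n]=\{1,\dots,n\}$, $[0,n]=\{0,\dots,n\}$. A hypermatrix of order $n$ is an integer array $A=(A_{i,j,k})_{i,j,k\in[n]}$; $\Xi(A)_{i,j,k}=\sum_{a\le i,b\le j,c\le k}A_{a,b,c}$ for $i,j,k\in[0,n]$. A corner-sum hypermatrix of order $n$ is an integer array $C$ indexed by $[0,n]^3$ such that for all $i,j\in[0,n]$: $C_{i,j,0}=C_{i,0,j}=C_{0,i,j}=0$, $C_{i,j,n}=C_{i,n,j}=C_{n,i,j}=ij$, and for all $k\in[n]$ each of $C_{i,j,k}-C_{i,j,k-1}$, $C_{i,k,j}-C_{i,k-1,j}$, $C_{k,i,j}-C_{k-1,i,j}$ is an integer in $\{\max(0,i+j-n),\dots,\min(i,j)\}$; $\mathcal C_n$ is the set of these. The Bruhat order on such hypermatrices: $A\preceq_B B$ iff $\Xi(A)\ge\Xi(B)$ entrywise (equivalently, $A-B$ is a sum of positive T-blocks). The partial-sum hypermatrix is $P(A)_{i,j,k}=\sum_{a=1}^i\sum_{b=1}^k A_{a,j,b}$ (non-negative whenever $\Xi(A)\in\mathcal C_n$). $\Delta(A)$ is the family of sequences $\Delta(A)_{i,*,k}$, $i,k\in[n]$, in which each $j\in[n]$ occurs exactly $P(A)_{i,j,k}$ times, listed in weakly increasing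 order; this sequence has length $ik$, and $\Delta(A)_{i,j,k}$ denotes its $j$-th entry. *)

theory Defs
  imports Main
begin

text \<open>A hypermatrix of order n is represented as a function nat => nat => nat => int;
  only the entries with indices in {1..n} are relevant.\<close>
type_synonym hmat = "nat \<Rightarrow> nat \<Rightarrow> nat \<Rightarrow> int"

definition Xi :: "hmat \<Rightarrow> hmat" where
  "Xi A i j k = (\<Sum>a\<in>{1..i}. \<Sum>b\<in>{1..j}. \<Sum>c\<in>{1..k}. A a b c)"

definition corner_sum :: "nat \<Rightarrow> hmat \<Rightarrow> bool" where
  "corner_sum n C \<longleftrightarrow>
     (\<forall>i\<in>{0..n}. \<forall>j\<in>{0..n}.
        C i j 0 = 0 \<and> C i 0 j = 0 \<and> C 0 i j = 0 \<and>
        C i j n = int i * int j \<and> C i n j = int i * int j \<and> C n i j = int i * int j \<and>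
        (\<forall>k\<in>{1..n}.
           (let lo = max 0 (int i + int j - int n); hi = min (int i) (int j) in
              C i j k - C i j (k - 1) \<in> {lo..hi} \<and>
              C i k j - C i (k - 1) j \<in> {lo..hi} \<and>
              C k i j - C (k - 1) i j \<in> {lo..hi})))"

definition bruhat_le :: "nat \<Rightarrow> hmat \<Rightarrow> hmat \<Rightarrow> bool" where
  "bruhat_le n A B \<longleftrightarrow>
     (\<forall>i\<in>{0..n}. \<forall>j\<in>{0..n}. \<forall>k\<in>{0..n}. Xi A i j k \<ge> Xi B i j k)"

definition psum :: "hmat \<Rightarrow> hmat" where
  "psum A i j k = (\<Sum>a\<in>{1..i}. \<Sum>b\<in>{1..k}. A a j b)"

text \<open>The weakly increasing sequence Delta(A)_{i,*,k}, in which each j in [n] occurs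
  P(A)_{i,j,k} times.\<close>
definition Delta_seq :: "nat \<Rightarrow> hmat \<Rightarrow> nat \<Rightarrow> nat \<Rightarrow> nat list" where
  "Delta_seq n A i k = concat (map (\<lambda>j. replicate (nat (psum A i j k)) j) [1..<n+1])"

definition Delta :: "nat \<Rightarrow> hmat \<Rightarrow> nat \<Rightarrow> nat \<Rightarrow> nat \<Rightarrow> nat" where
  "Delta n A i j k = Delta_seq n A i k ! (j - 1)"

end

theory Submission
  imports Defs
begin

lemma sorted_count_iff:
  fixes xs ys :: "nat list"
  assumes sx: "sorted xs" and sy: "sorted ys" and len: "length xs = length ys"
  shows "(\<forall>p<length xs. xs!p \<le> ys!p) \<longleftrightarrow>
     (\<forall>m. card {p. p<length ys \<and> ys!p \<le> m} \<le> card {p. p<length xs \<and> xs!p \<le> m})"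
proof
  assume h: "\<forall>p<length xs. xs!p \<le> ys!p"
  show "\<forall>m. card {p. p<length ys \<and> ys!p \<le> m} \<le> card {p. p<length xs \<and> xs!p \<le> m}"
  proof
    fix m
    show "card {p. p<length ys \<and> ys!p \<le> m} \<le> card {p. p<length xs \<and> xs!p \<le> m}"
      by (rule card_mono) (use h len in \<open>auto intro: le_trans\<close>)
  qed
next
  assume h: "\<forall>m. card {p. p<length ys \<and> ys!p \<le> m} \<le> card {p. p<length xs \<and> xs!p \<le> m}"
  show "\<forall>p<length xs. xs!p \<le> ys!p"
  proof (rule ccontr)
    assume "\<not> (\<forall>p<length xs. xs!p \<le> ys!p)"
    then obtain p where p: "p < length xs" "ys!p < xs!p" by auto
    define m where "m = ys!p"
    have s1: "{0..p} \<subseteq> {q. q<length ys \<and> ys!q \<le> m}"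
      using p len sy by (auto simp: m_def intro: sorted_nth_mono)
    have s2: "{q. q<length xs \<and> xs!q \<le> m} \<subseteq> {0..<p}"
    proof
      fix q assume q: "q \<in> {q. q<length xs \<and> xs!q \<le> m}"
      show "q \<in> {0..<p}"
      proof (rule ccontr)
        assume "q \<notin> {0..<p}"
        then have "p \<le> q" by auto
        then have "xs!p \<le> xs!q" using sx q by (auto intro: sorted_nth_mono)
        then show False using q p by (auto simp: m_def)
      qed
    qed
    have "Suc p \<le> card {q. q<length ys \<and> ys!q \<le> m}"
      using card_mono[OF _ s1] by auto
    also have "\<dots> \<le> card {q. q<length xs \<and> xs!q \<le> m}" using h by auto
    also have "\<dots> \<le> p" using card_mono[OF _ s2] by auto
    finally show False by simp
  qed
qed

definition sq :: "(nat \<Rightarrow> nat) \<Rightarrow> nat \<Rightarrow> nat list" where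
  "sq c n = concat (map (\<lambda>j. replicate (c j) j) [1..<n+1])"

lemma sq_Suc: "sq c (Suc n) = sq c n @ replicate (c (Suc n)) (Suc n)"
  by (simp add: sq_def)

lemma sq_set: "set (sq c n) \<subseteq> {1..n}"
  by (induction n) (auto simp: sq_Suc, auto simp: sq_def)

lemma sq_sorted: "sorted (sq c n)"
proof (induction n)
  case 0 then show ?case by (simp add: sq_def)
next
  case (Suc n)
  have "\<forall>x\<in>set (sq c n). x \<le> Suc n" using sq_set[of c n] by auto
  then show ?case using Suc by (auto simp: sq_Suc sorted_append)
qed

lemma sq_len: "length (sq c n) = (\<Sum>j\<in>{1..n}. c j)"
  by (induction n) (auto simp: sq_Suc, simp add: sq_def)

lemma sq_filter: "length (filter (\<lambda>x. x \<le> m) (sq c n)) = (\<Sum>j\<in>{1..n}. if j \<le> m then c j else 0)"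
  by (induction n) (auto simp: sq_Suc, simp_all add: sq_def)

lemma sq_card: "card {p. p < length (sq c n) \<and> sq c n ! p \<le> m} = (\<Sum>j\<in>{1..n}. if j \<le> m then c j else 0)"
  using sq_filter[of m c n] length_filter_conv_card[of "\<lambda>x. x \<le> m" "sq c n"] by simp

lemma Xi_psum: "Xi A i j k = (\<Sum>b\<in>{1..j}. psum A i b k)"
  unfolding Xi_def psum_def by (rule sum.swap)

lemma Delta_seq_sq: "Delta_seq n A i k = sq (\<lambda>j. nat (psum A i j k)) n"
  by (simp add: Delta_seq_def sq_def)

lemma psum_nonneg:
  assumes cs: "corner_sum n (Xi A)" and i: "i \<le> n" and k: "k \<le> n" and j: "j \<in> {1..n}"
  shows "psum A i j k \<ge> 0"
proof -
  have "Xi A i j k - Xi A i (j - 1) k \<ge> max 0 (int i + int k - int n)"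
    using cs i k j unfolding corner_sum_def Let_def by fastforce
  moreover have "Xi A i j k = Xi A i (j - 1) k + psum A i j k"
  proof -
    have "(\<Sum>b\<in>{1..j}. psum A i b k) = (\<Sum>b\<in>{1..j-1}. psum A i b k) + psum A i j k"
      using j by (cases j) auto
    then show ?thesis unfolding Xi_psum .
  qed
  ultimately show ?thesis by simp
qed

lemma count_eq:
  assumes cs: "corner_sum n (Xi A)" and i: "i \<le> n" and k: "k \<le> n"
  shows "int (card {p. p < length (Delta_seq n A i k) \<and> Delta_seq n A i k ! p \<le> m})
          = Xi A i (min m n) k"
proof -
  have "int (card {p. p < length (Delta_seq n A i k) \<and> Delta_seq n A i k ! p \<le> m})
      = (\<Sum>j\<in>{1..n}. if j \<le> m then psum A i j k else 0)"
    unfolding Delta_seq_sq sq_card of_nat_sum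
    by (rule sum.cong) (use psum_nonneg[OF cs i k] in auto)
  also have "\<dots> = (\<Sum>j\<in>{j\<in>{1..n}. j \<le> m}. psum A i j k)"
    by (rule sum.inter_filter[symmetric]) simp
  also have "{j\<in>{1..n}. j \<le> m} = {1..min m n}" by auto
  finally show ?thesis by (simp add: Xi_psum)
qed

lemma len_eq:
  assumes cs: "corner_sum n (Xi A)" and i: "i \<le> n" and k: "k \<le> n"
  shows "length (Delta_seq n A i k) = i * k"
proof -
  have "int (length (Delta_seq n A i k)) = (\<Sum>j\<in>{1..n}. psum A i j k)"
    unfolding Delta_seq_sq sq_len of_nat_sum
    by (rule sum.cong) (use psum_nonneg[OF cs i k] in auto)
  also have "\<dots> = Xi A i n k" by (simp add: Xi_psum)
  also have "\<dots> = int i * int k" using cs i k unfolding corner_sum_def by auto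
  finally show ?thesis by (metis of_nat_eq_iff of_nat_mult)
qed

lemma Xi_zero: "i = 0 \<or> j = 0 \<or> k = 0 \<Longrightarrow> Xi A i j k = 0"
  unfolding Xi_def by auto

theorem mainTheorem20:
  fixes n :: nat and A B :: hmat
  assumes "corner_sum n (Xi A)" and "corner_sum n (Xi B)"
  shows "bruhat_le n A B \<longleftrightarrow>
    (\<forall>i\<in>{1..n}. \<forall>k\<in>{1..n}. \<forall>j\<in>{1..i*k}. Delta n A i j k \<le> Delta n B i j k)"
proof -
  have key: "(\<forall>m\<in>{0..n}. Xi A i m k \<ge> Xi B i m k) \<longleftrightarrow>
      (\<forall>j\<in>{1..i*k}. Delta n A i j k \<le> Delta n B i j k)"
    if i: "i \<le> n" and k: "k \<le> n" for i k
  proof -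
    let ?a = "Delta_seq n A i k" and ?b = "Delta_seq n B i k"
    have la: "length ?a = i*k" and lb: "length ?b = i*k"
      using len_eq[OF assms(1) i k] len_eq[OF assms(2) i k] .
    have "(\<forall>m\<in>{0..n}. Xi A i m k \<ge> Xi B i m k) \<longleftrightarrow> (\<forall>m. Xi A i (min m n) k \<ge> Xi B i (min m n) k)"
    proof
      assume h: "\<forall>m\<in>{0..n}. Xi A i m k \<ge> Xi B i m k"
      show "\<forall>m. Xi A i (min m n) k \<ge> Xi B i (min m n) k" using h by simp
    next
      assume h: "\<forall>m. Xi A i (min m n) k \<ge> Xi B i (min m n) k"
      show "\<forall>m\<in>{0..n}. Xi A i m k \<ge> Xi B i m k"
      proof
        fix m assume "m \<in> {0..n}"
        then have "min m n = m" by simp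
        then show "Xi A i m k \<ge> Xi B i m k" using h[rule_format, of m] by simp
      qed
    qed
    also have "\<dots> \<longleftrightarrow> (\<forall>m. card {p. p<length ?b \<and> ?b!p \<le> m} \<le> card {p. p<length ?a \<and> ?a!p \<le> m})"
      by (simp only: count_eq[OF assms(1) i k, symmetric] count_eq[OF assms(2) i k, symmetric] of_nat_le_iff)
    also have "\<dots> \<longleftrightarrow> (\<forall>p<length ?a. ?a!p \<le> ?b!p)"
    proof -
      have "sorted ?a" "sorted ?b" by (simp_all add: Delta_seq_sq sq_sorted)
      moreover have "length ?a = length ?b" using la lb by simp
      ultimately show ?thesis by (rule sorted_count_iff[symmetric])
    qed
    also have "\<dots> \<longleftrightarrow> (\<forall>j\<in>{1..i*k}. Delta n A i j k \<le> Delta n B i j k)"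
      unfolding Delta_def la
    proof
      assume h: "\<forall>p<i*k. ?a!p \<le> ?b!p"
      show "\<forall>j\<in>{1..i*k}. ?a!(j-1) \<le> ?b!(j-1)"
      proof
        fix j assume "j \<in> {1..i*k}"
        then have "j - 1 < i*k" by auto
        then show "?a!(j-1) \<le> ?b!(j-1)" using h by blast
      qed
    next
      assume h: "\<forall>j\<in>{1..i*k}. ?a!(j-1) \<le> ?b!(j-1)"
      show "\<forall>p<i*k. ?a!p \<le> ?b!p"
      proof (intro allI impI)
        fix p assume "p < i*k"
        then have "Suc p \<in> {1..i*k}" by auto
        then show "?a!p \<le> ?b!p" using h by fastforce
      qed
    qed
    finally show ?thesis .
  qed
  have "bruhat_le n A B \<longleftrightarrow> (\<forall>i\<in>{1..n}. \<forall>k\<in>{1..n}. \<forall>m\<in>{0..n}. Xi A i m k \<ge> Xi B i m k)"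
    unfolding bruhat_le_def
  proof
    assume h: "\<forall>i\<in>{0..n}. \<forall>j\<in>{0..n}. \<forall>k\<in>{0..n}. Xi B i j k \<le> Xi A i j k"
    show "\<forall>i\<in>{1..n}. \<forall>k\<in>{1..n}. \<forall>m\<in>{0..n}. Xi A i m k \<ge> Xi B i m k"
    proof (intro ballI)
      fix i k m assume r: "i \<in> {1..n}" "k \<in> {1..n}" "m \<in> {0..n}"
      then have "i \<in> {0..n}" "k \<in> {0..n}" by auto
      then show "Xi A i m k \<ge> Xi B i m k" using h r(3) by blast
    qed
  next
    assume h: "\<forall>i\<in>{1..n}. \<forall>k\<in>{1..n}. \<forall>m\<in>{0..n}. Xi A i m k \<ge> Xi B i m k"
    show "\<forall>i\<in>{0..n}. \<forall>j\<in>{0..n}. \<forall>k\<in>{0..n}. Xi B i j k \<le> Xi A i j k"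
    proof (intro ballI)
      fix i j k assume r: "i \<in> {0..n}" "j \<in> {0..n}" "k \<in> {0..n}"
      show "Xi B i j k \<le> Xi A i j k"
      proof (cases "i = 0 \<or> k = 0")
        case True then show ?thesis using Xi_zero[of i j k] by auto
      next
        case False
        then have "i \<in> {1..n}" "k \<in> {1..n}" using r by auto
        then show ?thesis using h r(2) by blast
      qed
    qed
  qed
  also have "\<dots> \<longleftrightarrow> (\<forall>i\<in>{1..n}. \<forall>k\<in>{1..n}. \<forall>j\<in>{1..i*k}. Delta n A i j k \<le> Delta n B i j k)"
    by (intro ball_cong refl key) auto
  finally show ?thesis .
qed

end
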